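(* Assume the standing setting, let $\epsilon>0$, fix a coarse index $j$ and an integer $m$ with $1\le m\le r/2$. If $|u^0_i-u^0_{i+1}|\le \epsilon/3^{M}$ for all $i\in\mathbb Z$, then $|u^M_{jr}-u^M_{jr+m}|\le m\epsilon$.
   Context: Standing setting. Let $F:\mathbb R\to\mathbb R$ be continuously differentiable. For a spatial step $\eta>0$, a time step $\tau>0$ and an initial sequence $(z^0_i)_{i\in\mathbb Z}$ of reals, the EFC (Euler forward in time, centered in space) scheme produces $(z^n_i)_{i\in\mathbb Z,\,n\in\mathbb N}$ by $z^{n+1}_i=z^n_i-F'(z^n_i)\frac{\tau}{2\eta}\,(z^n_{i+1}-z^n_{i-1})$. It satisfies the CFL condition if $|F'(z^n_i)|\,\tau/\eta\le 1$ for all $i\in\mathbb Z$, $n\in\mathbb N$. Fix $a\in\mathbb R$, $h>0$, $\Delta t>0$, an integer $N>1$ and an even integer $r\ge 2$; put $k=h/r$, $dt=\Delta t/r$, $M=Nr$. Let $u_0:\mathbb R\to\mathbb R$. The coarse solution $(w^n_j)$ is the EFC scheme with $\eta=h$, $\tau=\Delta t$, $w^0_j=u_0(a+jh)$; the fine solution $(u^n_i)$ is the EFC scheme with $\eta=k$, $\tau=dt$, $u^0_i=u_0(a+ik)$ (so $w^0_j=u^0_{jr}$). Both are assumed to satisfy the CFL condition. *)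

theory Defs
  imports "HOL-Analysis.Analysis"
begin

text \<open>EFC scheme (Euler forward in time, centred in space) with derivative F',
spatial step eta, time step tau, initial sequence z0; result indexed by time n and space i.\<close>
fun efc :: "(real \<Rightarrow> real) \<Rightarrow> real \<Rightarrow> real \<Rightarrow> (int \<Rightarrow> real) \<Rightarrow> nat \<Rightarrow> int \<Rightarrow> real" where
  "efc F' eta tau z0 0 i = z0 i"
| "efc F' eta tau z0 (Suc n) i =
     efc F' eta tau z0 n i
     - F' (efc F' eta tau z0 n i) * (tau / (2 * eta))
       * (efc F' eta tau z0 n (i + 1) - efc F' eta tau z0 n (i - 1))"

definition cfl :: "(real \<Rightarrow> real) \<Rightarrow> real \<Rightarrow> real \<Rightarrow> (int \<Rightarrow> real) \<Rightarrow> bool" where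
  "cfl F' eta tau z0 \<longleftrightarrow>
     (\<forall>n i. \<bar>F' (efc F' eta tau z0 n i)\<bar> * tau / eta \<le> 1)"

end

theory Submission
  imports Defs
begin

lemma efc_step_bound:
  assumes eta: "eta > 0" and tau: "tau > 0" and c: "cfl F' eta tau z0"
    and init: "\<And>i. \<bar>z0 i - z0 (i + 1)\<bar> \<le> D"
  shows "\<bar>efc F' eta tau z0 n i - efc F' eta tau z0 n (i + 1)\<bar> \<le> 3 ^ n * D"
proof (induction n arbitrary: i)
  case 0
  then show ?case using init by simp
next
  case (Suc n)
  define z where "z = efc F' eta tau z0 n"
  define c1 where "c1 = F' (z i) * (tau / (2 * eta))"
  define c2 where "c2 = F' (z (i+1)) * (tau / (2 * eta))"
  have cb: "\<bar>F' (z k) * (tau / (2 * eta))\<bar> \<le> 1/2" for k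
  proof -
    have "\<bar>F' (z k)\<bar> * tau / eta \<le> 1" using c unfolding cfl_def z_def by blast
    moreover have "\<bar>F' (z k) * (tau / (2 * eta))\<bar> = (\<bar>F' (z k)\<bar> * tau / eta) / 2"
      using eta tau by (simp add: abs_mult field_simps)
    ultimately show ?thesis by simp
  qed
  have IH: "\<bar>z k - z (k + 1)\<bar> \<le> 3 ^ n * D" for k using Suc.IH unfolding z_def by blast
  have d1: "\<bar>z (i+1) - z (i - 1)\<bar> \<le> 2 * 3 ^ n * D"
    using IH[of "i-1"] IH[of i] by auto
  have d2: "\<bar>z (i+1+1) - z (i + 1 - 1)\<bar> \<le> 2 * 3 ^ n * D"
    using IH[of "i+1"] IH[of i] by (auto simp: add.assoc)
  have e: "efc F' eta tau z0 (Suc n) i - efc F' eta tau z0 (Suc n) (i + 1)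
     = (z i - z (i+1)) - c1 * (z (i+1) - z (i - 1)) + c2 * (z (i+1+1) - z (i + 1 - 1))"
    by (simp add: z_def c1_def c2_def)
  have t1: "\<bar>c1 * (z (i+1) - z (i - 1))\<bar> \<le> 1/2 * (2 * 3 ^ n * D)"
    unfolding abs_mult[of c1] using cb[of i, folded c1_def] d1 by (intro mult_mono) auto
  have t2: "\<bar>c2 * (z (i+1+1) - z (i + 1 - 1))\<bar> \<le> 1/2 * (2 * 3 ^ n * D)"
    unfolding abs_mult[of c2] using cb[of "i+1", folded c2_def] d2 by (intro mult_mono) auto
  show ?case unfolding e using IH[of i] t1 t2 by (simp add: abs_le_iff)
qed

lemma telescope:
  fixes f :: "int \<Rightarrow> real"
  assumes "\<And>i. \<bar>f i - f (i + 1)\<bar> \<le> E"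
  shows "\<bar>f k - f (k + int m)\<bar> \<le> real m * E"
proof (induction m)
  case 0 then show ?case by simp
next
  case (Suc m)
  have "\<bar>f (k + int m) - f (k + int m + 1)\<bar> \<le> E" by (rule assms)
  moreover have "f k - f (k + int (Suc m)) = (f k - f (k + int m)) + (f (k + int m) - f (k + int m + 1))"
    by (simp add: ac_simps)
  ultimately show ?case using Suc.IH abs_triangle_ineq[of "f k - f (k + int m)" "f (k + int m) - f (k + int m + 1)"]
    by (simp add: algebra_simps)
qed

theorem proposition9:
  fixes F F' :: "real \<Rightarrow> real" and u0 :: "real \<Rightarrow> real"
    and a h \<Delta>t \<epsilon> :: real and N r m :: nat and j :: int
  assumes F_deriv: "\<And>x. (F has_real_derivative F' x) (at x)"
    and F'_cont: "continuous_on UNIV F'"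
    and h_pos: "h > 0" and dt_pos: "\<Delta>t > 0"
    and N_gt: "N > 1"
    and r_even: "even r" and r_ge: "r \<ge> 2"
    and cfl_coarse: "cfl F' h \<Delta>t (\<lambda>j. u0 (a + real_of_int j * h))"
    and cfl_fine: "cfl F' (h / real r) (\<Delta>t / real r) (\<lambda>i. u0 (a + real_of_int i * (h / real r)))"
    and eps_pos: "\<epsilon> > 0"
    and m_ge: "1 \<le> m" and m_le: "m \<le> r div 2"
    and init_close: "\<And>i::int. \<bar>u0 (a + real_of_int i * (h / real r))
                                 - u0 (a + real_of_int (i + 1) * (h / real r))\<bar>
                               \<le> \<epsilon> / 3 ^ (N * r)"
  shows "\<bar>efc F' (h / real r) (\<Delta>t / real r) (\<lambda>i. u0 (a + real_of_int i * (h / real r)))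
            (N * r) (j * int r)
        - efc F' (h / real r) (\<Delta>t / real r) (\<lambda>i. u0 (a + real_of_int i * (h / real r)))
            (N * r) (j * int r + int m)\<bar> \<le> real m * \<epsilon>"
proof -
  have rp: "real r > 0" using r_ge by simp
  have b: "\<bar>efc F' (h / real r) (\<Delta>t / real r) (\<lambda>i. u0 (a + real_of_int i * (h / real r))) (N*r) i
       - efc F' (h / real r) (\<Delta>t / real r) (\<lambda>i. u0 (a + real_of_int i * (h / real r))) (N*r) (i + 1)\<bar>
       \<le> 3 ^ (N*r) * (\<epsilon> / 3 ^ (N * r))" for i
    by (rule efc_step_bound) (use rp h_pos dt_pos cfl_fine init_close in auto)
  have "3 ^ (N*r) * (\<epsilon> / 3 ^ (N * r)) = (\<epsilon>::real)" by simp
  then show ?thesis using telescope[where f="efc F' (h / real r) (\<Delta>t / real r) (\<lambda>i. u0 (a + real_of_int i * (h / real r))) (N*r)", OF b] by simp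
qed

end
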